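(* Let $n\ge 4$ and let $B$ be an $n\times n$ nilpotent matrix over $\mathbb{F}$ with $B^2\neq 0$. Then $\mathcal{P}(\mathcal{N}_B)\subsetneq \mathcal{P}(n)$, i.e. there exists a partition $\underline{\mu}$ of $n$ such that no nilpotent matrix of shape $\underline{\mu}$ commutes with $B$.
   Context: $\mathbb{F}$ is an algebraically closed field of characteristic $0$. A partition of $n$ is a nonincreasing sequence of positive integers summing to $n$; $\mathcal{P}(n)$ denotes the set of all partitions of $n$. For a nilpotent matrix $A$, its shape $\mathrm{sh}(A)$ is the partition of $n$ given by the sizes of the Jordan blocks of its Jordan canonical form. For a nilpotent $n\times n$ matrix $B$, $\mathcal{N}_B$ is the set of all nilpotent $n\times n$ matrices $A$ with $AB=BA$, and $\mathcal{P}(\mathcal{N}_B)=\{\mathrm{sh}(A): A\in\mathcal{N}_B\}$. *)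

theory Defs
  imports "Jordan_Normal_Form.Jordan_Normal_Form"
begin

definition alg_closed_type :: "'a :: field itself \<Rightarrow> bool" where
  "alg_closed_type _ \<longleftrightarrow> (\<forall>p :: 'a poly. degree p \<ge> 1 \<longrightarrow> (\<exists>x. poly p x = 0))"

definition is_partition :: "nat \<Rightarrow> nat list \<Rightarrow> bool" where
  "is_partition n mu \<longleftrightarrow> sorted_wrt (\<ge>) mu \<and> (\<forall>x\<in>set mu. 0 < x) \<and> sum_list mu = n"

definition nilpotent_mat :: "'a :: semiring_1 mat \<Rightarrow> bool" where
  "nilpotent_mat A \<longleftrightarrow> (\<exists>k. A ^\<^sub>m k = 0\<^sub>m (dim_row A) (dim_col A))"

definition has_shape :: "'a :: semiring_1 mat \<Rightarrow> nat list \<Rightarrow> bool" where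
  "has_shape A mu \<longleftrightarrow> (\<exists>n_as. jordan_nf A n_as \<and> mu = rev (sort (map fst n_as)))"

definition nil_commutator :: "nat \<Rightarrow> 'a :: semiring_1 mat \<Rightarrow> 'a mat set" where
  "nil_commutator n B = {A. A \<in> carrier_mat n n \<and> nilpotent_mat A \<and> A * B = B * A}"

end

theory Submission
  imports Defs "Jordan_Normal_Form.Jordan_Normal_Form_Uniqueness"
begin


definition toep :: "nat \<Rightarrow> (nat \<Rightarrow> 'a::comm_ring_1) \<Rightarrow> 'a mat" where
  "toep d f = mat d d (\<lambda>(i,j). if i \<le> j then f (j - i) else 0)"

definition conv :: "(nat \<Rightarrow> 'a::comm_ring_1) \<Rightarrow> (nat \<Rightarrow> 'a) \<Rightarrow> nat \<Rightarrow> 'a" where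
  "conv f g k = (\<Sum>a\<le>k. f a * g (k - a))"

lemma toep_carrier[simp]: "toep d f \<in> carrier_mat d d"
  by (simp add: toep_def)

lemma toep_dim[simp]: "dim_row (toep d f) = d" "dim_col (toep d f) = d"
  by (simp_all add: toep_def)

lemma toep_index[simp]: "i < d \<Longrightarrow> j < d \<Longrightarrow> toep d f $$ (i,j) = (if i \<le> j then f (j - i) else 0)"
  by (simp add: toep_def)

lemma toep_mult: "toep d f * toep d g = toep d (conv f g)"
proof (rule eq_matI)
  fix i j assume i: "i < dim_row (toep d (conv f g))" and j: "j < dim_col (toep d (conv f g))"
  hence i: "i < d" and j: "j < d" by auto
  have "(toep d f * toep d g) $$ (i,j) = (\<Sum>l\<in>{0..<d}. (if i \<le> l then f (l - i) else 0) * (if l \<le> j then g (j - l) else 0))"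
    using i j by (simp add: scalar_prod_def)
  also have "\<dots> = (if i \<le> j then conv f g (j - i) else 0)"
  proof (cases "i \<le> j")
    case True
    have "(\<Sum>l\<in>{0..<d}. (if i \<le> l then f (l - i) else 0) * (if l \<le> j then g (j - l) else 0))
        = (\<Sum>l\<in>{i..j}. f (l - i) * g (j - l))"
      by (rule sum.mono_neutral_cong_right, insert j, auto)
    also have "\<dots> = (\<Sum>a\<in>{0+i..(j-i)+i}. f (a - i) * g (j - a))" using True by simp
    also have "\<dots> = (\<Sum>a\<in>{0..j-i}. f a * g (j - i - a))"
      by (subst sum.shift_bounds_cl_nat_ivl, rule sum.cong, auto simp: add.commute)
    also have "\<dots> = conv f g (j - i)" unfolding conv_def by (simp add: atMost_atLeast0)
    finally show ?thesis using True by simp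
  next
    case False
    thus ?thesis by (intro trans[OF sum.neutral], auto)
  qed
  finally show "(toep d f * toep d g) $$ (i,j) = toep d (conv f g) $$ (i,j)" using i j by simp
qed auto

lemma toep_zero: "(\<And>i. i < d \<Longrightarrow> f i = 0) \<Longrightarrow> toep d f = 0\<^sub>m d d"
  by (intro eq_matI, auto)

lemma conv_low: assumes "\<And>i. i < m \<Longrightarrow> f i = 0" "\<And>i. i < m' \<Longrightarrow> g i = 0"
  shows "k < m + m' \<Longrightarrow> conv f g k = 0" and "conv f g (m + m') = f m * g m'"
proof -
  show "k < m + m' \<Longrightarrow> conv f g k = 0" unfolding conv_def
  proof (intro sum.neutral ballI)
    fix x assume k: "k < m + m'" and x: "x \<in> {..k}"
    show "f x * g (k - x) = 0"
    proof (cases "x < m")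
      case True thus ?thesis using assms by simp
    next
      case False hence "k - x < m'" using k x by auto
      thus ?thesis using assms by simp
    qed
  qed

  have "conv f g (m + m') = (\<Sum>a\<in>{..m+m'}. if a = m then f m * g m' else 0)"
    unfolding conv_def
  proof (rule sum.cong[OF refl])
    fix a assume "a \<in> {..m+m'}"
    show "f a * g (m + m' - a) = (if a = m then f m * g m' else 0)"
    proof (cases "a < m")
      case True thus ?thesis using assms by simp
    next
      case False
      show ?thesis
      proof (cases "a = m")
        case False
        with \<open>\<not> a < m\<close> \<open>a \<in> {..m+m'}\<close> have "m + m' - a < m'" by auto
        thus ?thesis using assms False by simp
      qed simp
    qed
  qed
  also have "\<dots> = f m * g m'" by simp
  finally show "conv f g (m + m') = f m * g m'" .
qed




lemma unit_inverse: fixes G :: "'a :: field mat"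
  assumes G: "G \<in> carrier_mat d d" and det: "det G \<noteq> 0"
  obtains C where "C \<in> carrier_mat d d" "G * C = 1\<^sub>m d" "C * G = 1\<^sub>m d"
proof -
  from det_non_zero_imp_unit[OF G det, of undefined]
  have "G \<in> Units (ring_mat TYPE('a) d undefined)" .
  thus ?thesis using that unfolding Units_def ring_mat_def by auto
qed

lemma toep_det: "det (toep d (f :: nat \<Rightarrow> 'a :: field)) = f 0 ^ d"
proof -
  have "upper_triangular (toep d f)" by (auto simp: upper_triangular_def)
  from det_upper_triangular[OF this toep_carrier]
  have "det (toep d f) = prod_list (diag_mat (toep d f))" .
  also have "diag_mat (toep d f) = replicate d (f 0)"
    by (intro nth_equalityI, auto simp: diag_mat_def)
  finally show ?thesis by simp
qed

lemma toep_delta_pow: "toep d (\<lambda>i. if i = m then 1 else 0) = (jordan_block d (0::'a::field)) ^\<^sub>m m"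
  unfolding jordan_block_zero_pow by (intro eq_matI, auto)

lemma toep_kernel_dim: fixes f :: "nat \<Rightarrow> 'a :: field"
  assumes m: "m < d" and fm: "f m \<noteq> 0" and low: "\<And>i. i < m \<Longrightarrow> f i = 0"
  shows "kernel.dim d (toep d f) = m"
proof -
  let ?g = "\<lambda>i. f (i + m)"
  have "conv (\<lambda>i. if i = m then 1 else 0) ?g = f"
  proof
    fix k
    have "conv (\<lambda>i. if i = m then 1 else 0) ?g k = (\<Sum>a\<le>k. if a = m then ?g (k - a) else 0)"
      unfolding conv_def by (rule sum.cong, auto)
    also have "\<dots> = (if m \<le> k then f k else 0)" by (subst sum.delta, auto)
    also have "\<dots> = f k" using low by auto
    finally show "conv (\<lambda>i. if i = m then 1 else 0) ?g k = f k" .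
  qed
  hence eq: "toep d f = (jordan_block d 0) ^\<^sub>m m * toep d ?g"
    unfolding toep_delta_pow[symmetric] toep_mult by simp
  have "det (toep d ?g) \<noteq> 0" unfolding toep_det using fm by simp
  from unit_inverse[OF toep_carrier this] obtain C where C: "C \<in> carrier_mat d d"
    "toep d ?g * C = 1\<^sub>m d" by auto
  have "kernel.dim d (toep d f) = kernel.dim d ((jordan_block d (0::'a)) ^\<^sub>m m)"
    unfolding eq by (rule mat_kernel_dim_mult_eq_right[OF _ toep_carrier C], auto)
  also have "\<dots> = m" using dim_kernel_zero_jordan_block_pow[of d m, where 'a='a] m by simp
  finally show ?thesis .
qed

lemma kernel_dim_zero: "kernel.dim d (0\<^sub>m d d :: 'a :: field mat) = d"
proof -
  have "(jordan_block d (0::'a)) ^\<^sub>m d = 0\<^sub>m d d"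
    unfolding jordan_block_zero_pow by (intro eq_matI, auto)
  with dim_kernel_zero_jordan_block_pow[of d d, where 'a='a] show ?thesis by simp
qed




lemma shift_comm_eq:
  fixes M Sm :: "'a::comm_ring_1 mat"
  assumes M: "M \<in> carrier_mat n n" and Sm: "Sm \<in> carrier_mat n n" and d: "d \<le> n"
    and Sidx: "\<And>i j. i < n \<Longrightarrow> j < n \<Longrightarrow> Sm $$ (i,j) = (if Suc i = j \<and> j < d then 1 else 0)"
    and comm: "M * Sm = Sm * M"
    and i: "i < n" and j: "j < n"
  shows "(if 0 < j \<and> j < d then M $$ (i, j - 1) else 0) = (if Suc i < d then M $$ (Suc i, j) else 0)"
proof -
  have "(M * Sm) $$ (i,j) = (\<Sum>l\<in>{0..<n}. M $$ (i,l) * Sm $$ (l,j))"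
    using M Sm i j by (simp add: scalar_prod_def)
  also have "\<dots> = (\<Sum>l\<in>{0..<n}. if l = j - 1 then (if 0 < j \<and> j < d then M $$ (i,l) else 0) else 0)"
    by (rule sum.cong[OF refl], insert j, auto simp: Sidx)
  also have "\<dots> = (if 0 < j \<and> j < d then M $$ (i, j - 1) else 0)"
    by (subst sum.delta, insert j, auto)
  finally have 1: "(M * Sm) $$ (i,j) = (if 0 < j \<and> j < d then M $$ (i, j - 1) else 0)" .
  have "(Sm * M) $$ (i,j) = (\<Sum>l\<in>{0..<n}. Sm $$ (i,l) * M $$ (l,j))"
    using M Sm i j by (simp add: scalar_prod_def)
  also have "\<dots> = (\<Sum>l\<in>{0..<n}. if l = Suc i then (if Suc i < d then M $$ (l,j) else 0) else 0)"
    by (rule sum.cong[OF refl], insert i, auto simp: Sidx)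
  also have "\<dots> = (if Suc i < d then M $$ (Suc i, j) else 0)"
    by (subst sum.delta, insert d, auto)
  finally have 2: "(Sm * M) $$ (i,j) = (if Suc i < d then M $$ (Suc i, j) else 0)" .
  from 1 2 comm show ?thesis by simp
qed

lemma shift_comm:
  fixes M Sm :: "'a::comm_ring_1 mat"
  assumes M: "M \<in> carrier_mat n n" and Sm: "Sm \<in> carrier_mat n n" and d: "d \<le> n"
    and Sidx: "\<And>i j. i < n \<Longrightarrow> j < n \<Longrightarrow> Sm $$ (i,j) = (if Suc i = j \<and> j < d then 1 else 0)"
    and comm: "M * Sm = Sm * M"
  shows "\<And>i j. i < d \<Longrightarrow> j < d \<Longrightarrow> M $$ (i,j) = (if i \<le> j then M $$ (0, j - i) else 0)"
    and "\<And>i j. d \<le> i \<Longrightarrow> i < n \<Longrightarrow> Suc j < d \<Longrightarrow> M $$ (i,j) = 0"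
    and "\<And>i j. 0 < i \<Longrightarrow> i < d \<Longrightarrow> d \<le> j \<Longrightarrow> j < n \<Longrightarrow> M $$ (i,j) = 0"
proof -
  note E = shift_comm_eq[OF M Sm d Sidx comm]
  show "\<And>i j. i < d \<Longrightarrow> j < d \<Longrightarrow> M $$ (i,j) = (if i \<le> j then M $$ (0, j - i) else 0)"
  proof -
    fix i j assume "i < d" "j < d"
    thus "M $$ (i,j) = (if i \<le> j then M $$ (0, j - i) else 0)"
    proof (induct i arbitrary: j)
      case 0 thus ?case by simp
    next
      case (Suc i j)
      show ?case
      proof (cases j)
        case 0
        from E[of i 0] Suc(2-3) d show ?thesis unfolding 0 by auto
      next
        case (Suc j')
        from E[of i j] \<open>Suc i < d\<close> \<open>j < d\<close> d have "M $$ (i, j') = M $$ (Suc i, j)"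
          unfolding Suc by auto
        with Suc.hyps[of j'] \<open>Suc i < d\<close> \<open>j < d\<close> show ?thesis unfolding Suc by auto
      qed
    qed
  qed
  show "\<And>i j. d \<le> i \<Longrightarrow> i < n \<Longrightarrow> Suc j < d \<Longrightarrow> M $$ (i,j) = 0"
  proof -
    fix i j assume *: "d \<le> i" "i < n" "Suc j < d"
    from E[of i "Suc j"] * d show "M $$ (i,j) = 0" by auto
  qed
  show "\<And>i j. 0 < i \<Longrightarrow> i < d \<Longrightarrow> d \<le> j \<Longrightarrow> j < n \<Longrightarrow> M $$ (i,j) = 0"
  proof -
    fix i j assume *: "0 < i" "i < d" "d \<le> j" "j < n"
    from E[of "i - 1" j] * d show "M $$ (i,j) = 0" by auto
  qed
qed

lemma pow_mult_vec: assumes M: "M \<in> carrier_mat n n" and v: "v \<in> carrier_vec n"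
  shows "M ^\<^sub>m Suc k *\<^sub>v v = M ^\<^sub>m k *\<^sub>v (M *\<^sub>v v)"
proof -
  have "M ^\<^sub>m Suc k = M ^\<^sub>m k * M" by simp
  thus ?thesis using M v by (simp add: assoc_mult_mat_vec[of _ n n _ n])
qed

lemma pow_eigen_vec: fixes M :: "'a :: field mat" assumes M: "M \<in> carrier_mat n n" and v: "v \<in> carrier_vec n"
  and ev: "M *\<^sub>v v = c \<cdot>\<^sub>v v"
  shows "M ^\<^sub>m k *\<^sub>v v = (c ^ k) \<cdot>\<^sub>v v"
proof (induct k)
  case 0 thus ?case using v M by simp
next
  case (Suc k)
  have "M ^\<^sub>m Suc k *\<^sub>v v = M ^\<^sub>m k *\<^sub>v (c \<cdot>\<^sub>v v)" using pow_mult_vec[OF M v] ev by simp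
  also have "\<dots> = c \<cdot>\<^sub>v (M ^\<^sub>m k *\<^sub>v v)" by (rule mult_mat_vec[of _ n n], insert M v, auto)
  also have "\<dots> = (c ^ Suc k) \<cdot>\<^sub>v v" unfolding Suc using v by (simp add: smult_smult_assoc)
  finally show ?case .
qed




lemma sum_filter_min_le: fixes xs :: "(nat \<times> 'b) list" and K :: nat
  shows "(\<Sum>n\<leftarrow>map fst [(n,e)\<leftarrow>xs . e = c]. min K n) \<le> sum_list (map fst xs)"
  by (induct xs) (auto simp: min_def)

lemma sum_filter_min_eq: fixes xs :: "(nat \<times> 'b) list" and K :: nat
  shows "(\<forall>x\<in>set xs. 0 < fst x) \<Longrightarrow>
  (\<Sum>n\<leftarrow>map fst [(n,e)\<leftarrow>xs . e = c]. min K n) = sum_list (map fst xs) \<Longrightarrow> \<forall>x\<in>set xs. snd x = c"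
proof (induct xs)
  case (Cons x xs)
  obtain s e where x: "x = (s,e)" by force
  note le = sum_filter_min_le[where c=c and K=K and xs=xs]
  show ?case
  proof (cases "e = c")
    case True
    with Cons(3) have "min K s + (\<Sum>n\<leftarrow>map fst [(n,e)\<leftarrow>xs . e = c]. min K n) = s + sum_list (map fst xs)"
      unfolding x by simp
    with le have "(\<Sum>n\<leftarrow>map fst [(n,e)\<leftarrow>xs . e = c]. min K n) = sum_list (map fst xs)" by linarith
    with Cons True show ?thesis unfolding x by auto
  next
    case False
    with Cons(3) have "(\<Sum>n\<leftarrow>map fst [(n,e)\<leftarrow>xs . e = c]. min K n) = s + sum_list (map fst xs)"
      unfolding x by simp
    with le Cons(2) show ?thesis unfolding x by auto
  qed
qed simp

lemma char_matrix_0: "A \<in> carrier_mat n n \<Longrightarrow> char_matrix A 0 = A"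
  unfolding char_matrix_def by (intro eq_matI, auto)

lemma jnf_nilpotent_ev0: fixes A :: "'a :: field mat"
  assumes A: "A \<in> carrier_mat n n" and jnf: "jordan_nf A n_as" and nil: "nilpotent_mat A"
  shows "\<forall>x\<in>set n_as. snd x = 0"
proof -
  from nil[unfolded nilpotent_mat_def] A obtain K where K: "A ^\<^sub>m K = 0\<^sub>m n n" by auto
  from jnf[unfolded jordan_nf_def] have z: "0 \<notin> fst ` set n_as" and sim: "similar_mat A (jordan_matrix n_as)"
    by auto
  have pos: "\<forall>x\<in>set n_as. 0 < fst x"
  proof
    fix x assume "x \<in> set n_as"
    hence "fst x \<in> fst ` set n_as" by (rule imageI)
    with z show "0 < fst x" by (cases "fst x", auto)
  qed
  from similar_matD[OF sim] obtain m P Q where "{A, jordan_matrix n_as, P, Q} \<subseteq> carrier_mat m m" by blast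
  hence "A \<in> carrier_mat m m" "jordan_matrix n_as \<in> carrier_mat m m" by auto
  with A have n: "n = sum_list (map fst n_as)" unfolding carrier_mat_def by auto
  have "dim_gen_eigenspace A 0 K = kernel_dim (A ^\<^sub>m K)"
    unfolding dim_gen_eigenspace_def char_matrix_0[OF A] ..
  also have "\<dots> = n" unfolding K kernel_dim_def using kernel_dim_zero[of n, where 'a='a] by simp
  finally have "(\<Sum>n\<leftarrow>map fst [(n,e)\<leftarrow>n_as . e = 0]. min K n) = sum_list (map fst n_as)"
    unfolding dim_gen_eigenspace[OF jnf] n by simp
  from sum_filter_min_eq[OF pos this] show ?thesis .
qed

lemma shape_single: assumes "has_shape A [n]"
  shows "\<exists>a. jordan_nf A [(n,a)]"
proof -
  from assms[unfolded has_shape_def] obtain n_as where jnf: "jordan_nf A n_as" and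
    eq: "[n] = rev (sort (map fst n_as))" by auto
  from arg_cong[OF eq, of length] have "length n_as = 1" by simp
  then obtain x where x: "n_as = [x]" by (cases n_as, auto)
  with eq have "fst x = n" by simp
  with jnf x show ?thesis by (intro exI[of _ "snd x"], cases x, auto)
qed

lemma shape_two: assumes "has_shape A [a, b]" and ab: "a \<noteq> b"
  shows "\<exists>e1 e2. jordan_nf A [(a,e1),(b,e2)] \<or> jordan_nf A [(b,e2),(a,e1)]"
proof -
  from assms[unfolded has_shape_def] obtain n_as where jnf: "jordan_nf A n_as" and
    eq: "[a, b] = rev (sort (map fst n_as))" by auto
  from arg_cong[OF eq, of length] have "length n_as = 2" by simp
  then obtain x y where x: "n_as = [x,y]" by (cases n_as; cases "tl n_as", auto)
  obtain p e1 q e2 where xy: "x = (p,e1)" "y = (q,e2)" by force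
  from eq[unfolded x xy] ab have "(p = a \<and> q = b) \<or> (p = b \<and> q = a)"
    by (cases "p \<le> q", auto)
  thus ?thesis using jnf unfolding x xy by auto
qed




lemma mult_unit_vec: fixes M :: "'a :: semiring_1 mat" assumes M: "M \<in> carrier_mat n n" and j: "j < n" shows "M *\<^sub>v unit_vec n j = col M j"
proof (rule eq_vecI)
  fix i assume "i < dim_vec (col M j)"
  hence i: "i < n" using M by auto
  have "row M i \<bullet> unit_vec n j = row M i $ j" by (rule scalar_prod_right_unit[OF j])
  thus "(M *\<^sub>v unit_vec n j) $ i = col M j $ i" using M i j by simp
qed (insert M, auto)

lemma conj_comm: fixes A J P Q B :: "'a::comm_ring_1 mat"
  assumes wit: "similar_mat_wit A J P Q" and A: "A \<in> carrier_mat n n" and B: "B \<in> carrier_mat n n"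
    and AB: "A * B = B * A"
  shows "similar_mat_wit B (Q * B * P) P Q" "(Q * B * P) * J = J * (Q * B * P)"
    "Q * B * P \<in> carrier_mat n n" "J \<in> carrier_mat n n"
proof -
  note w = similar_mat_witD2[OF A wit]
  have P: "P \<in> carrier_mat n n" and Q: "Q \<in> carrier_mat n n" and J: "J \<in> carrier_mat n n"
    using w by auto
  have PQ: "P * Q = 1\<^sub>m n" and QP: "Q * P = 1\<^sub>m n" and AJ: "A = P * J * Q" using w by auto
  have QPX: "\<And>X. X \<in> carrier_mat n n \<Longrightarrow> Q * (P * X) = X"
    using P Q QP by (metis assoc_mult_mat left_mult_one_mat)
  have PQX: "\<And>X. X \<in> carrier_mat n n \<Longrightarrow> P * (Q * X) = X"
    using P Q PQ by (metis assoc_mult_mat left_mult_one_mat)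
  have "Q * A * P = Q * (P * (J * Q)) * P" unfolding AJ using P J Q by simp
  also have "Q * (P * (J * Q)) = J * Q" by (rule QPX, insert J Q, auto)
  also have "J * Q * P = J" using J Q P QP by simp
  finally have JA: "J = Q * A * P" ..
  have "P * (Q * B * P) * Q = P * (Q * (B * P)) * Q" using P Q B by simp
  also have "P * (Q * (B * P)) = B * P" by (rule PQX, insert B P, auto)
  also have "B * P * Q = B" using B Q P PQ by simp
  finally have BB: "B = P * (Q * B * P) * Q" ..
  have conj: "\<And>X Y :: 'a mat. X \<in> carrier_mat n n \<Longrightarrow> Y \<in> carrier_mat n n \<Longrightarrow> (Q * X * P) * (Q * Y * P) = Q * (X * Y) * P"
  proof -
    fix X Y :: "'a mat" assume X: "X \<in> carrier_mat n n" and Y: "Y \<in> carrier_mat n n"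
    have "(Q * X * P) * (Q * Y * P) = Q * (X * (P * (Q * (Y * P))))" using X Y P Q by (simp add: assoc_mult_mat[of _ n n _ n _ n])
    also have "P * (Q * (Y * P)) = Y * P" by (rule PQX, insert Y P, auto)
    also have "Q * (X * (Y * P)) = Q * (X * Y) * P" using X Y P Q by (simp add: assoc_mult_mat[of _ n n _ n _ n])
    finally show "(Q * X * P) * (Q * Y * P) = Q * (X * Y) * P" .
  qed
  show "similar_mat_wit B (Q * B * P) P Q"
    by (rule similar_mat_witI[OF PQ QP BB B _ P Q], insert P Q B, auto)
  show "Q * B * P \<in> carrier_mat n n" "J \<in> carrier_mat n n" using P Q B J by auto
  have "(Q * B * P) * J = Q * (B * A) * P" unfolding JA by (rule conj[OF B A])
  also have "\<dots> = Q * (A * B) * P" unfolding AB ..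
  also have "\<dots> = J * (Q * B * P)" unfolding JA by (rule conj[OF A B, symmetric])
  finally show "(Q * B * P) * J = J * (Q * B * P)" .
qed

lemma pow2_mat: "M \<in> carrier_mat n n \<Longrightarrow> M ^\<^sub>m 2 = M * M"
  by (simp add: numeral_2_eq_2)

lemma nilpotent_zero_pow: fixes M :: "'a::field mat"
  assumes M: "M \<in> carrier_mat n n" and nil: "nilpotent_mat M" and j: "j < n"
    and col: "M *\<^sub>v unit_vec n j = c \<cdot>\<^sub>v unit_vec n j"
  shows "c = 0"
proof -
  from nil[unfolded nilpotent_mat_def] M obtain K where K: "M ^\<^sub>m K = 0\<^sub>m n n" by auto
  have z: "0\<^sub>m n n *\<^sub>v unit_vec n j = 0\<^sub>v n" by (intro eq_vecI, auto)
  from pow_eigen_vec[OF M unit_vec_carrier col, of K] K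
  have "0\<^sub>v n = (c ^ K) \<cdot>\<^sub>v unit_vec n j" unfolding K z by simp
  from arg_cong[OF this, of "\<lambda>v. v $ j"] j have "c ^ K = 0" by simp
  thus ?thesis by simp
qed

lemma nilpotent_similar: assumes "similar_mat_wit B B1 P Q" "B \<in> carrier_mat n n" "nilpotent_mat B"
  shows "nilpotent_mat B1"
proof -
  note w = similar_mat_witD2[OF assms(2,1)]
  from assms(3)[unfolded nilpotent_mat_def] assms(2) obtain K where K: "B ^\<^sub>m K = 0\<^sub>m n n" by auto
  from similar_mat_wit_pow[OF assms(1), of K] have "similar_mat_wit (B ^\<^sub>m K) (B1 ^\<^sub>m K) P Q" .
  from similar_mat_wit_sym[OF this] have "B1 ^\<^sub>m K = Q * B ^\<^sub>m K * P" unfolding similar_mat_wit_def Let_def by auto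
  with K w have "B1 ^\<^sub>m K = 0\<^sub>m n n" by simp
  with w show ?thesis unfolding nilpotent_mat_def by auto
qed

lemma A_side: fixes A B :: "'a::field mat"
  assumes A: "A \<in> carrier_mat n n" and B: "B \<in> carrier_mat n n" and nB: "nilpotent_mat B"
    and shA: "has_shape A [n]" and nA: "nilpotent_mat A" and AB: "A * B = B * A"
    and BB: "B * B \<noteq> 0\<^sub>m n n"
  shows "\<exists>k. 0 < k \<and> 2 * k < n \<and> kernel.dim n B = k \<and> kernel.dim n (B * B) = 2 * k"
proof -
  from shape_single[OF shA] obtain a where jnf: "jordan_nf A [(n,a)]" by auto
  from jnf_nilpotent_ev0[OF A jnf nA] have a: "a = 0" by auto
  have jm: "jordan_matrix [(n, 0)] = jordan_block n 0" unfolding jordan_matrix_def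
    by (simp only: list.map case_prod_conv diag_block_mat_singleton)
  from jnf[unfolded a jordan_nf_def jm] have "similar_mat A (jordan_block n 0)" by simp
  then obtain P Q where wit: "similar_mat_wit A (jordan_block n 0) P Q" unfolding similar_mat_def by auto
  define B1 where "B1 = Q * B * P"
  note cc = conj_comm[OF wit A B AB, folded B1_def]
  have B1: "B1 \<in> carrier_mat n n" using cc by auto
  define b where "b i = B1 $$ (0, i)" for i
  have "\<And>i j. i < n \<Longrightarrow> j < n \<Longrightarrow> B1 $$ (i,j) = (if i \<le> j then B1 $$ (0, j - i) else 0)"
    by (rule shift_comm(1)[OF B1 _ le_refl _ cc(2)], auto)
  hence B1t: "B1 = toep n b" unfolding b_def by (intro eq_matI, insert B1, auto)
  have n0: "n > 0" using BB B by (cases n, auto)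
  have "B1 *\<^sub>v unit_vec n 0 = b 0 \<cdot>\<^sub>v unit_vec n 0"
    unfolding mult_unit_vec[OF B1 n0] B1t by (intro eq_vecI, auto)
  from nilpotent_zero_pow[OF B1 nilpotent_similar[OF cc(1) B nB] n0 this] have b0: "b 0 = 0" .
  note w = similar_mat_witD2[OF B cc(1)]
  have ex: "\<exists>i<n. b i \<noteq> 0"
  proof (rule ccontr)
    assume "\<not> ?thesis"
    hence "B1 = 0\<^sub>m n n" unfolding B1t by (intro toep_zero, auto)
    hence "B = 0\<^sub>m n n" using w by simp
    with BB B show False by simp
  qed
  define k where "k = (LEAST i. i < n \<and> b i \<noteq> 0)"
  have "k < n \<and> b k \<noteq> 0" unfolding k_def by (rule LeastI_ex, insert ex, auto)
  hence kn: "k < n" and bk: "b k \<noteq> 0" by auto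
  have low: "\<And>i. i < k \<Longrightarrow> b i = 0" using not_less_Least kn unfolding k_def by fastforce
  have k0: "0 < k" using bk b0 by (cases k, auto)
  have kd1: "kernel.dim n B = k"
    using similar_mat_wit_kernel_dim[OF B cc(1)] toep_kernel_dim[of k n b, OF kn bk low] B1t by simp
  have BBw: "similar_mat_wit (B * B) (B1 * B1) P Q"
    using similar_mat_wit_pow[OF cc(1), of 2] pow2_mat[OF B] pow2_mat[OF B1] by simp
  have BB1: "B1 * B1 = toep n (conv b b)" unfolding B1t toep_mult ..
  note cl = conv_low[of k b k b, OF low low]
  have kk: "2 * k < n"
  proof (rule ccontr)
    assume "\<not> 2 * k < n"
    hence "B1 * B1 = 0\<^sub>m n n" unfolding BB1 by (intro toep_zero cl, auto)
    moreover have BBc: "B * B \<in> carrier_mat n n" using B by simp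
    note w2 = similar_mat_witD2[OF BBc BBw]
    ultimately have "B * B = 0\<^sub>m n n" using w2 by simp
    with BB show False ..
  qed
  have "kernel.dim n (B * B) = kernel.dim n (B1 * B1)"
    using similar_mat_wit_kernel_dim[OF _ BBw] B by simp
  also have "\<dots> = 2 * k" unfolding BB1
    by (rule toep_kernel_dim, insert kk cl bk, auto simp: mult_2)
  finally show ?thesis using k0 kk kd1 by auto
qed




lemma zero_cols_kernel_dim: fixes M :: "'a :: field mat"
  assumes M: "M \<in> carrier_mat n n" and S: "S \<subseteq> {..<n}"
    and z: "\<And>i j. j \<in> S \<Longrightarrow> i < n \<Longrightarrow> M $$ (i,j) = 0"
  shows "card S \<le> kernel.dim n M"
proof -
  interpret K: kernel n n M by (unfold_locales, rule M)
  let ?U = "(unit_vec n ` S :: 'a vec set)"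
  have sub: "?U \<subseteq> mat_kernel M"
  proof
    fix v :: "'a vec" assume "v \<in> ?U"
    then obtain j where j: "j \<in> S" and v: "v = unit_vec n j" by auto
    from j S have jn: "j < n" by auto
    have "M *\<^sub>v v = 0\<^sub>v n" unfolding v mult_unit_vec[OF M jn]
      by (intro eq_vecI, insert M jn z[OF j], auto)
    thus "v \<in> mat_kernel M" by (intro mat_kernelI[OF M], auto simp: v)
  qed
  have subU: "?U \<subseteq> set (unit_vecs n)" using S unfolding unit_vecs_def by auto
  have "\<not> K.NC.lin_dep (set (unit_vecs n))" using K.NC.unit_vecs_basis unfolding K.NC.basis_def by auto
  hence "\<not> K.NC.lin_dep ?U" using K.NC.supset_ld_is_ld[OF _ subU] by auto
  hence li: "\<not> K.Ker.lin_dep ?U" using K.lindep_same[OF sub] by simp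
  from kernel_basis_exists[OF M] obtain bas where "finite bas" "K.Ker.basis bas" by auto
  hence fd: "K.Ker.fin_dim" unfolding K.Ker.fin_dim_def K.Ker.basis_def by auto
  have "card ?U = card S"
    by (rule card_image, insert S, auto simp: inj_on_def)
  with K.Ker.li_le_dim(2)[OF fd sub li] show ?thesis by simp
qed

lemma jm2: "jordan_matrix [(p,0),(q,0)] = four_block_mat (jordan_block p (0::'a::{zero,one})) (0\<^sub>m p q) (0\<^sub>m q p) (jordan_block q 0)"
proof -
  have "jordan_matrix [(q, 0::'a)] = jordan_block q 0" unfolding jordan_matrix_def
    by (simp only: list.map case_prod_conv diag_block_mat_singleton)
  thus ?thesis unfolding jordan_matrix_Cons[of p 0 "[(q,0)]"] by simp
qed

lemma sum_delta_mult: fixes m a :: nat shows "(\<Sum>l\<in>{0..<m}. f l * (if l = a then c else 0)) = (if a < m then f a * c else (0::'a::comm_ring_1))"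
  by (subst sum.cong[OF refl, of _ _ "\<lambda>l. if l = a then f a * c else 0"], auto simp: sum.delta)

lemma sum_delta_mult2: fixes m a :: nat shows "(\<Sum>l\<in>{0..<m}. (if l = a then c else 0) * f l) = (if a < m then c * f a else (0::'a::comm_ring_1))"
  by (subst sum.cong[OF refl, of _ _ "\<lambda>l. if l = a then c * f a else 0"], auto simp: sum.delta)

lemma swap_similar: fixes A D :: "'a :: comm_ring_1 mat"
  assumes A: "A \<in> carrier_mat a a" and D: "D \<in> carrier_mat d d"
  shows "similar_mat (four_block_mat D (0\<^sub>m d a) (0\<^sub>m a d) A) (four_block_mat A (0\<^sub>m a d) (0\<^sub>m d a) D)"
proof -
  have e: "a + d = d + a" by simp
  define P where "P = four_block_mat (0\<^sub>m d a) (1\<^sub>m d) (1\<^sub>m a) (0\<^sub>m a d :: 'a mat)"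
  define Q where "Q = four_block_mat (0\<^sub>m a d) (1\<^sub>m a) (1\<^sub>m d) (0\<^sub>m d a :: 'a mat)"
  have P: "P \<in> carrier_mat (d + a) (d + a)" unfolding P_def 
    using four_block_carrier_mat[OF zero_carrier_mat[of d a] zero_carrier_mat[of a d], of "1\<^sub>m d" "1\<^sub>m a"]
    unfolding e .
  have Q: "Q \<in> carrier_mat (d + a) (d + a)" unfolding Q_def 
    using four_block_carrier_mat[OF zero_carrier_mat[of a d] zero_carrier_mat[of d a], of "1\<^sub>m a" "1\<^sub>m d"]
    unfolding e .
  have "P * Q = four_block_mat (0\<^sub>m d a * 0\<^sub>m a d + 1\<^sub>m d * 1\<^sub>m d) (0\<^sub>m d a * 1\<^sub>m a + 1\<^sub>m d * 0\<^sub>m d a)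
     (1\<^sub>m a * 0\<^sub>m a d + 0\<^sub>m a d * 1\<^sub>m d) (1\<^sub>m a * 1\<^sub>m a + 0\<^sub>m a d * 0\<^sub>m d a)"
    unfolding P_def Q_def by (rule mult_four_block_mat[OF zero_carrier_mat one_carrier_mat one_carrier_mat zero_carrier_mat zero_carrier_mat one_carrier_mat one_carrier_mat zero_carrier_mat])
  also have "\<dots> = four_block_mat (1\<^sub>m d) (0\<^sub>m d a) (0\<^sub>m a d) (1\<^sub>m a)" by simp
  also have "\<dots> = 1\<^sub>m (d + a)" by (rule four_block_one_mat)
  finally have PQ: "P * Q = 1\<^sub>m (d + a)" .
  have "Q * P = four_block_mat (0\<^sub>m a d * 0\<^sub>m d a + 1\<^sub>m a * 1\<^sub>m a) (0\<^sub>m a d * 1\<^sub>m d + 1\<^sub>m a * 0\<^sub>m a d)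
     (1\<^sub>m d * 0\<^sub>m d a + 0\<^sub>m d a * 1\<^sub>m a) (1\<^sub>m d * 1\<^sub>m d + 0\<^sub>m d a * 0\<^sub>m a d)"
    unfolding P_def Q_def by (rule mult_four_block_mat[OF zero_carrier_mat one_carrier_mat one_carrier_mat zero_carrier_mat zero_carrier_mat one_carrier_mat one_carrier_mat zero_carrier_mat])
  also have "\<dots> = four_block_mat (1\<^sub>m a) (0\<^sub>m a d) (0\<^sub>m d a) (1\<^sub>m d)" by simp
  also have "\<dots> = 1\<^sub>m (a + d)" by (rule four_block_one_mat)
  finally have QP: "Q * P = 1\<^sub>m (d + a)" unfolding e .
  have "P * four_block_mat A (0\<^sub>m a d) (0\<^sub>m d a) D = four_block_mat (0\<^sub>m d a * A + 1\<^sub>m d * 0\<^sub>m d a)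
     (0\<^sub>m d a * 0\<^sub>m a d + 1\<^sub>m d * D) (1\<^sub>m a * A + 0\<^sub>m a d * 0\<^sub>m d a) (1\<^sub>m a * 0\<^sub>m a d + 0\<^sub>m a d * D)"
    unfolding P_def by (rule mult_four_block_mat[OF zero_carrier_mat one_carrier_mat one_carrier_mat zero_carrier_mat A zero_carrier_mat zero_carrier_mat D])
  also have "\<dots> = four_block_mat (0\<^sub>m d a) D A (0\<^sub>m a d)" using A D by simp
  finally have 1: "P * four_block_mat A (0\<^sub>m a d) (0\<^sub>m d a) D = four_block_mat (0\<^sub>m d a) D A (0\<^sub>m a d)" .
  have "four_block_mat (0\<^sub>m d a) D A (0\<^sub>m a d) * Q = four_block_mat (0\<^sub>m d a * 0\<^sub>m a d + D * 1\<^sub>m d)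
     (0\<^sub>m d a * 1\<^sub>m a + D * 0\<^sub>m d a) (A * 0\<^sub>m a d + 0\<^sub>m a d * 1\<^sub>m d) (A * 1\<^sub>m a + 0\<^sub>m a d * 0\<^sub>m d a)"
    unfolding Q_def by (rule mult_four_block_mat[OF zero_carrier_mat D A zero_carrier_mat zero_carrier_mat one_carrier_mat one_carrier_mat zero_carrier_mat])
  also have "\<dots> = four_block_mat D (0\<^sub>m d a) (0\<^sub>m a d) A" using A D by simp
  finally have 2: "four_block_mat (0\<^sub>m d a) D A (0\<^sub>m a d) * Q = four_block_mat D (0\<^sub>m d a) (0\<^sub>m a d) A" .
  have c1: "four_block_mat D (0\<^sub>m d a) (0\<^sub>m a d) A \<in> carrier_mat (d + a) (d + a)"
    using four_block_carrier_mat[OF D A] .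
  have c2: "four_block_mat A (0\<^sub>m a d) (0\<^sub>m d a) D \<in> carrier_mat (d + a) (d + a)"
    using four_block_carrier_mat[OF A D] unfolding e .
  have 3: "four_block_mat D (0\<^sub>m d a) (0\<^sub>m a d) A = P * four_block_mat A (0\<^sub>m a d) (0\<^sub>m d a) D * Q"
    unfolding 1 2 ..
  show ?thesis
    by (rule similar_matI[of _ _ P Q "d + a", OF _ PQ QP 3], insert c1 c2 P Q, simp)
qed

lemma X_normal: fixes X :: "'a :: field mat"
  assumes X: "X \<in> carrier_mat n n" and nX: "nilpotent_mat X" and sh: "has_shape X [n - 1, 1]" and n: "3 \<le> n"
  shows "similar_mat X (four_block_mat (jordan_block (n - 1) 0) (0\<^sub>m (n - 1) 1) (0\<^sub>m 1 (n - 1)) (jordan_block 1 0))"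
proof -
  have "n - 1 \<noteq> 1" using n by simp
  from shape_two[OF sh this] obtain e1 e2 where
    "jordan_nf X [(n - 1, e1), (1, e2)] \<or> jordan_nf X [(1, e2), (n - 1, e1)]" by auto
  thus ?thesis
  proof
    assume jnf: "jordan_nf X [(n - 1, e1), (1, e2)]"
    from jnf_nilpotent_ev0[OF X jnf nX] have "e1 = 0" "e2 = 0" by auto
    with jnf have "similar_mat X (jordan_matrix [(n - 1, 0), (1, 0)])" unfolding jordan_nf_def by simp
    thus ?thesis unfolding jm2 .
  next
    assume jnf: "jordan_nf X [(1, e2), (n - 1, e1)]"
    from jnf_nilpotent_ev0[OF X jnf nX] have "e1 = 0" "e2 = 0" by auto
    with jnf have "similar_mat X (jordan_matrix [(1, 0), (n - 1, 0)])" unfolding jordan_nf_def by simp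
    hence "similar_mat X (four_block_mat (jordan_block 1 0) (0\<^sub>m 1 (n - 1)) (0\<^sub>m (n - 1) 1) (jordan_block (n - 1) 0))"
      unfolding jm2 .
    from similar_mat_trans[OF this swap_similar] show ?thesis by simp
  qed
qed

lemma N_index: assumes n: "2 \<le> n" and i: "i < n" and j: "j < n"
  shows "four_block_mat (jordan_block (n - 1) 0) (0\<^sub>m (n - 1) 1) (0\<^sub>m 1 (n - 1)) (jordan_block 1 (0 :: 'a :: {zero,one})) $$ (i,j)
    = (if Suc i = j \<and> j < n - 1 then 1 else 0)"
proof -
  have ij: "i < n - 1 + 1" "j < n - 1 + 1" using i j n by auto
  have "four_block_mat (jordan_block (n - 1) 0) (0\<^sub>m (n - 1) 1) (0\<^sub>m 1 (n - 1)) (jordan_block 1 (0 :: 'a)) $$ (i,j)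
    = (if i < n - 1 then if j < n - 1 then jordan_block (n - 1) 0 $$ (i,j) else 0\<^sub>m (n - 1) 1 $$ (i, j - (n - 1))
       else if j < n - 1 then 0\<^sub>m 1 (n - 1) $$ (i - (n - 1), j) else jordan_block 1 (0 :: 'a) $$ (i - (n - 1), j - (n - 1)))"
    by (rule trans[OF index_mat_four_block(1)], insert ij, auto)
  also have "\<dots> = (if Suc i = j \<and> j < n - 1 then 1 else 0)" using i j n by auto
  finally show ?thesis .
qed

lemma N_carrier: "2 \<le> n \<Longrightarrow> four_block_mat (jordan_block (n - 1) 0) (0\<^sub>m (n - 1) 1) (0\<^sub>m 1 (n - 1)) (jordan_block 1 (0 :: 'a :: {zero,one})) \<in> carrier_mat n n"
  using four_block_carrier_mat[OF jordan_block_carrier[of "n - 1" "0::'a"] jordan_block_carrier[of 1 "0::'a"],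
    of "0\<^sub>m (n - 1) 1" "0\<^sub>m 1 (n - 1)"] by simp




definition colop :: "nat \<Rightarrow> nat \<Rightarrow> 'a \<Rightarrow> 'a::comm_ring_1 mat" where
  "colop n m c = mat n n (\<lambda>(i,j). if i = j then 1 else if i = m \<and> j = n - 1 then c else 0)"

lemma colop_carrier[simp]: "colop n m c \<in> carrier_mat n n" unfolding colop_def by simp
lemma colop_dim[simp]: "dim_row (colop n m c) = n" "dim_col (colop n m c) = n" unfolding colop_def by simp_all

lemma colop_mult: fixes M :: "'a::comm_ring_1 mat"
  assumes M: "M \<in> carrier_mat n n" and i: "i < n" and j: "j < n" and m: "m < n - 1"
  shows "(M * colop n m c) $$ (i,j) = M $$ (i,j) + (if j = n - 1 then c * M $$ (i,m) else 0)"
proof -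
  have "(M * colop n m c) $$ (i,j) = (\<Sum>l\<in>{0..<n}. M $$ (i,l) * colop n m c $$ (l,j))"
    using M i j by (simp add: scalar_prod_def)
  also have "\<dots> = (\<Sum>l\<in>{0..<n}. M $$ (i,l) * (if l = j then 1 else 0) + M $$ (i,l) * (if l = m then (if j = n - 1 then c else 0) else 0))"
    by (rule sum.cong[OF refl], insert j m, auto simp: colop_def)
  also have "\<dots> = (\<Sum>l\<in>{0..<n}. M $$ (i,l) * (if l = j then 1 else 0)) + (\<Sum>l\<in>{0..<n}. M $$ (i,l) * (if l = m then (if j = n - 1 then c else 0) else 0))"
    by (rule sum.distrib)
  also have "\<dots> = M $$ (i,j) + (if j = n - 1 then c * M $$ (i,m) else 0)"
    unfolding sum_delta_mult using j m by auto
  finally show ?thesis .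
qed

lemma colop_inv: assumes m: "m < n - 1"
  shows "colop n m c * colop n m (- c) = (1\<^sub>m n :: 'a::comm_ring_1 mat)"
proof (rule eq_matI)
  fix i j assume "i < dim_row (1\<^sub>m n :: 'a mat)" "j < dim_col (1\<^sub>m n :: 'a mat)"
  hence i: "i < n" and j: "j < n" by auto
  show "(colop n m c * colop n m (- c)) $$ (i,j) = 1\<^sub>m n $$ (i,j)"
    using colop_mult[OF colop_carrier i j m, where c="- c"] i j m by (auto simp: colop_def)
qed auto

lemma X_side: fixes X B :: "'a::field mat"
  assumes X: "X \<in> carrier_mat n n" and B: "B \<in> carrier_mat n n" and n4: "4 \<le> n"
    and nX: "nilpotent_mat X" and nB: "nilpotent_mat B" and shX: "has_shape X [n - 1, 1]"
    and XB: "X * B = B * X" and kd1: "kernel.dim n B = k" and kd2: "kernel.dim n (B * B) = 2 * k"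
    and kk: "2 * k < n"
  shows False
proof -
  define N where "N = four_block_mat (jordan_block (n - 1) 0) (0\<^sub>m (n - 1) 1) (0\<^sub>m 1 (n - 1)) (jordan_block 1 (0::'a))"
  from X_normal[OF X nX shX] n4 have "similar_mat X N" unfolding N_def by simp
  then obtain P Q where wit: "similar_mat_wit X N P Q" unfolding similar_mat_def by auto
  define B2 where "B2 = Q * B * P"
  note cc = conj_comm[OF wit X B XB, folded B2_def]
  have B2c: "B2 \<in> carrier_mat n n" using cc by auto
  have Nc: "N \<in> carrier_mat n n" unfolding N_def using N_carrier n4 by auto
  have Nidx: "\<And>i j. i < n \<Longrightarrow> j < n \<Longrightarrow> N $$ (i,j) = (if Suc i = j \<and> j < n - 1 then 1 else 0)"
    unfolding N_def using N_index n4 by auto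
  note sc = shift_comm[OF B2c Nc diff_le_self Nidx cc(2)]
  have Tt: "\<And>i j. i < n - 1 \<Longrightarrow> j < n - 1 \<Longrightarrow> B2 $$ (i,j) = (if i \<le> j then B2 $$ (0, j - i) else 0)"
    by (rule sc(1))
  have Wz: "\<And>j. Suc j < n - 1 \<Longrightarrow> B2 $$ (n - 1, j) = 0" using sc(2)[of "n - 1"] n4 by auto
  have Uz: "\<And>i. 0 < i \<Longrightarrow> i < n - 1 \<Longrightarrow> B2 $$ (i, n - 1) = 0" using sc(3)[of _ "n - 1"] n4 by auto
  define t where "t i = B2 $$ (0, i)" for i
  define al where "al = B2 $$ (0, n - 1)"
  define be where "be = B2 $$ (n - 1, n - 2)"
  define ga where "ga = B2 $$ (n - 1, n - 1)"
  have nB2: "nilpotent_mat B2" by (rule nilpotent_similar[OF cc(1) B nB])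
  have n0: "0 < n" using n4 by auto
  have col0: "B2 *\<^sub>v unit_vec n 0 = t 0 \<cdot>\<^sub>v unit_vec n 0"
    unfolding mult_unit_vec[OF B2c n0]
  proof (rule eq_vecI)
    fix i assume "i < dim_vec (t 0 \<cdot>\<^sub>v unit_vec n 0)"
    hence i: "i < n" by simp
    have "B2 $$ (i, 0) = (if i = 0 then t 0 else 0)"
    proof (cases "i = 0")
      case False
      show ?thesis
      proof (cases "i < n - 1")
        case True with False Tt[of i 0] n4 show ?thesis by auto
      next
        case False 
        with i have "i = n - 1" by auto
        with Wz[of 0] n4 \<open>i \<noteq> 0\<close> show ?thesis by auto
      qed
    qed (simp add: t_def)
    thus "col B2 0 $ i = (t 0 \<cdot>\<^sub>v unit_vec n 0) $ i" using i B2c by auto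
  qed (insert B2c, auto)
  from nilpotent_zero_pow[OF B2c nB2 n0 col0] have t0: "t 0 = 0" .
  have nn: "n - 1 < n" using n4 by auto
  have colL: "B2 *\<^sub>v unit_vec n (n - 1) = al \<cdot>\<^sub>v unit_vec n 0 + ga \<cdot>\<^sub>v unit_vec n (n - 1)"
    unfolding mult_unit_vec[OF B2c nn]
  proof (rule eq_vecI)
    fix i assume "i < dim_vec (al \<cdot>\<^sub>v unit_vec n 0 + ga \<cdot>\<^sub>v unit_vec n (n - 1))"
    hence i: "i < n" by simp
    have "B2 $$ (i, n - 1) = (if i = 0 then al else 0) + (if i = n - 1 then ga else 0)"
    proof (cases "i = 0")
      case True thus ?thesis using n4 by (simp add: al_def)
    next
      case False
      show ?thesis
      proof (cases "i < n - 1")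
        case True with False Uz[of i] show ?thesis by auto
      next
        case False 
        with i have "i = n - 1" by auto
        thus ?thesis using n4 by (simp add: ga_def)
      qed
    qed
    thus "col B2 (n - 1) $ i = (al \<cdot>\<^sub>v unit_vec n 0 + ga \<cdot>\<^sub>v unit_vec n (n - 1)) $ i" using i B2c by auto
  qed (insert B2c, auto)
  have powL: "\<And>i. 0 < i \<Longrightarrow> i < n \<Longrightarrow> (B2 ^\<^sub>m K *\<^sub>v unit_vec n (n - 1)) $ i = (if i = n - 1 then ga ^ K else 0)" for K
  proof (induct K)
    case 0 thus ?case using B2c by auto
  next
    case (Suc K i)
    have "B2 ^\<^sub>m Suc K *\<^sub>v unit_vec n (n - 1) = B2 ^\<^sub>m K *\<^sub>v (al \<cdot>\<^sub>v unit_vec n 0 + ga \<cdot>\<^sub>v unit_vec n (n - 1))"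
      unfolding pow_mult_vec[OF B2c unit_vec_carrier] colL ..
    also have "\<dots> = al \<cdot>\<^sub>v (B2 ^\<^sub>m K *\<^sub>v unit_vec n 0) + ga \<cdot>\<^sub>v (B2 ^\<^sub>m K *\<^sub>v unit_vec n (n - 1))"
      using B2c by (simp add: mult_add_distrib_mat_vec[of _ n n] mult_mat_vec[of _ n n])
    also have "B2 ^\<^sub>m K *\<^sub>v unit_vec n 0 = (t 0 ^ K) \<cdot>\<^sub>v unit_vec n 0"
      by (rule pow_eigen_vec[OF B2c unit_vec_carrier col0])
    finally show ?case using Suc B2c by auto
  qed
  from nB2[unfolded nilpotent_mat_def] B2c obtain K where K: "B2 ^\<^sub>m K = 0\<^sub>m n n" by auto
  from powL[of "n - 1" K] n4 K have "ga ^ K = 0" by simp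
  hence ga0: "ga = 0" by simp
  define T where "T = toep (n - 1) t"
  define U where "U = mat (n - 1) 1 (\<lambda>(i,j). if i = 0 then al else (0::'a))"
  define W where "W = mat 1 (n - 1) (\<lambda>(i,j). if j = n - 2 then be else (0::'a))"
  define G where "G = (0\<^sub>m 1 1 :: 'a mat)"
  have Tc: "T \<in> carrier_mat (n - 1) (n - 1)" unfolding T_def by simp
  have Uc: "U \<in> carrier_mat (n - 1) 1" unfolding U_def by simp
  have Wc: "W \<in> carrier_mat 1 (n - 1)" unfolding W_def by simp
  have Gc: "G \<in> carrier_mat 1 1" unfolding G_def by simp
  have nsplit: "n - 1 + 1 = n" using n4 by simp
  have B2blk: "B2 = four_block_mat T U W G"
  proof (rule eq_matI)
    fix i j assume "i < dim_row (four_block_mat T U W G)" "j < dim_col (four_block_mat T U W G)"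
    hence i: "i < n" and j: "j < n" using Tc Gc nsplit by auto
    have "four_block_mat T U W G $$ (i,j) = (if i < n - 1 then if j < n - 1 then T $$ (i,j) else U $$ (i, j - (n - 1))
       else if j < n - 1 then W $$ (i - (n - 1), j) else G $$ (i - (n - 1), j - (n - 1)))"
      by (rule trans[OF index_mat_four_block(1)], insert i j Tc Uc Wc Gc nsplit, auto)
    also have "\<dots> = B2 $$ (i,j)"
    proof (cases "i < n - 1")
      case iT: True
      show ?thesis
      proof (cases "j < n - 1")
        case True thus ?thesis using iT Tt[OF iT True] unfolding T_def t_def by simp
      next
        case False hence jj: "j = n - 1" using j by auto
        show ?thesis using iT Uz[of i] unfolding jj U_def al_def by auto
      qed
    next
      case iF: False hence ii: "i = n - 1" using i by auto
      show ?thesis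
      proof (cases "j < n - 1")
        case True thus ?thesis using Wz[of j] n4 unfolding ii W_def be_def 
          by (cases "j = n - 2", auto)
      next
        case False hence jj: "j = n - 1" using j by auto
        show ?thesis using ga0 unfolding ii jj G_def ga_def by auto
      qed
    qed
    finally show "B2 $$ (i,j) = four_block_mat T U W G $$ (i,j)" ..
  qed (insert Tc Gc nsplit B2c, auto)
  have TT: "T * T = toep (n - 1) (conv t t)" unfolding T_def toep_mult ..
  define s where "s i = conv t t i + (if i = n - 2 then al * be else 0)" for i
  have S: "T * T + U * W = toep (n - 1) s"
  proof (rule eq_matI)
    fix i j assume "i < dim_row (toep (n - 1) s)" "j < dim_col (toep (n - 1) s)"
    hence i: "i < n - 1" and j: "j < n - 1" by auto
    have "(U * W) $$ (i,j) = (if i = 0 \<and> j = n - 2 then al * be else 0)"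
      using i j unfolding U_def W_def by (simp add: scalar_prod_def)
    thus "(T * T + U * W) $$ (i,j) = toep (n - 1) s $$ (i,j)" using i j Uc Wc
      unfolding TT s_def by auto
  qed (insert Uc Wc, auto)
  have TU: "T * U = 0\<^sub>m (n - 1) 1"
  proof (rule eq_matI)
    fix i j assume "i < dim_row (0\<^sub>m (n - 1) 1 :: 'a mat)" "j < dim_col (0\<^sub>m (n - 1) 1 :: 'a mat)"
    hence i: "i < n - 1" and j: "j = 0" by auto
    have "(T * U) $$ (i,j) = (\<Sum>l\<in>{0..<n-1}. T $$ (i,l) * (if l = 0 then al else 0))"
      using i j Tc Uc unfolding index_mult_mat(1)[of i T j U]
      by (auto intro!: sum.cong simp: U_def scalar_prod_def)
    also have "\<dots> = T $$ (i,0) * al" using sum_delta_mult[where m="n - 1" and a=0 and f="\<lambda>l. T $$ (i,l)" and c=al] n4 by simp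
    also have "\<dots> = 0" using i t0 unfolding T_def by simp
    finally show "(T * U) $$ (i,j) = 0\<^sub>m (n - 1) 1 $$ (i,j)" using i j by simp
  qed (insert Tc Uc, auto)
  have WT: "W * T = 0\<^sub>m 1 (n - 1)"
  proof (rule eq_matI)
    fix i j assume "i < dim_row (0\<^sub>m 1 (n - 1) :: 'a mat)" "j < dim_col (0\<^sub>m 1 (n - 1) :: 'a mat)"
    hence i: "i = 0" and j: "j < n - 1" by auto
    have "(W * T) $$ (i,j) = (\<Sum>l\<in>{0..<n-1}. (if l = n - 2 then be else 0) * T $$ (l,j))"
      using i j Tc Wc unfolding index_mult_mat(1)[of i W j T]
      by (auto intro!: sum.cong simp: W_def scalar_prod_def)
    also have "\<dots> = be * T $$ (n - 2, j)" using sum_delta_mult2[where m="n - 1" and a="n - 2" and c=be and f="\<lambda>l. T $$ (l,j)"] n4 by simp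
    also have "\<dots> = 0" using j t0 n4 unfolding T_def by auto
    finally show "(W * T) $$ (i,j) = 0\<^sub>m 1 (n - 1) $$ (i,j)" using i j by simp
  qed (insert Tc Wc, auto)
  have WU: "W * U = 0\<^sub>m 1 1"
  proof (rule eq_matI)
    fix i j assume "i < dim_row (0\<^sub>m 1 1 :: 'a mat)" "j < dim_col (0\<^sub>m 1 1 :: 'a mat)"
    hence i: "i = 0" and j: "j = 0" by auto
    have "(W * U) $$ (i,j) = (\<Sum>l\<in>{0..<n-1}. (if l = n - 2 then be else 0) * U $$ (l,j))"
      using i j Uc Wc unfolding index_mult_mat(1)[of i W j U]
      by (auto intro!: sum.cong simp: W_def U_def scalar_prod_def)
    also have "\<dots> = be * U $$ (n - 2, j)" using sum_delta_mult2[where m="n - 1" and a="n - 2" and c=be and f="\<lambda>l. U $$ (l,j)"] n4 by simp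
    also have "\<dots> = 0" using j n4 unfolding U_def by auto
    finally show "(W * U) $$ (i,j) = 0\<^sub>m 1 1 $$ (i,j)" using i j by simp
  qed (insert Uc Wc, auto)
  have BB2: "B2 * B2 = four_block_mat (toep (n - 1) s) (0\<^sub>m (n - 1) 1) (0\<^sub>m 1 (n - 1)) (0\<^sub>m 1 1)"
    unfolding B2blk mult_four_block_mat[OF Tc Uc Wc Gc Tc Uc Wc Gc] S TU WU WT
    using Uc Wc unfolding G_def by simp
  have kdS: "kernel.dim n (B2 * B2) = kernel.dim (n - 1) (toep (n - 1) s) + 1"
    using kernel_four_block_0_mat[OF BB2 toep_carrier zero_carrier_mat[of 1 1]] kernel_dim_zero[of 1, where 'a='a]
    unfolding nsplit by simp
  have BBw: "similar_mat_wit (B * B) (B2 * B2) P Q"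
    using similar_mat_wit_pow[OF cc(1), of 2] pow2_mat[OF B] pow2_mat[OF B2c] by simp
  have kdBB: "kernel.dim n (B * B) = kernel.dim n (B2 * B2)"
    using similar_mat_wit_kernel_dim[OF _ BBw] B by simp
  have kdB: "kernel.dim n B = kernel.dim n B2"
    using similar_mat_wit_kernel_dim[OF B cc(1)] .
  have kBB: "kernel.dim (n - 1) (toep (n - 1) s) + 1 = 2 * k" using kd2 kdBB kdS by simp
  have kB2: "kernel.dim n B2 = k" using kd1 kdB by simp
  show False
  proof (cases "\<exists>i<n - 2. t i \<noteq> 0")
    case True
    define m where "m = (LEAST i. i < n - 2 \<and> t i \<noteq> 0)"
    have "m < n - 2 \<and> t m \<noteq> 0" unfolding m_def by (rule LeastI_ex, insert True, auto)
    hence mn: "m < n - 2" and tm: "t m \<noteq> 0" by auto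
    have low: "\<And>i. i < m \<Longrightarrow> t i = 0" using not_less_Least[of _ "\<lambda>i. i < n - 2 \<and> t i \<noteq> 0"] mn
      unfolding m_def[symmetric] by fastforce
    have m0: "0 < m" using tm t0 by (cases m, auto)
    show False
    proof (cases "2 * m < n - 2")
      case True
      have slow: "\<And>i. i < m + m \<Longrightarrow> s i = 0" using conv_low(1)[of m t m t, OF low low] True unfolding s_def by auto
      have sm: "s (m + m) = t m * t m" using conv_low(2)[of m t m t, OF low low] True unfolding s_def by auto
      have "kernel.dim (n - 1) (toep (n - 1) s) = m + m"
        by (rule toep_kernel_dim, insert True sm tm slow, auto)
      with kBB have "m + m + 1 = 2 * k" by simp
      thus False by presburger
    next
      case False
      define c where "c = - al / t m"
      have mn1: "m < n - 1" using mn by auto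
      have "kernel.dim n (B2 * colop n m c) = kernel.dim n B2"
        by (rule mat_kernel_dim_mult_eq_right[OF B2c colop_carrier colop_carrier colop_inv[OF mn1]])
      moreover have "card ({..<m} \<union> {n - 1}) \<le> kernel.dim n (B2 * colop n m c)"
      proof (rule zero_cols_kernel_dim)
        show "B2 * colop n m c \<in> carrier_mat n n" using B2c by simp
        show "{..<m} \<union> {n - 1} \<subseteq> {..<n}" using mn by auto
        fix i j assume j: "j \<in> {..<m} \<union> {n - 1}" and i: "i < n"
        from j mn have jn: "j < n" by auto
        have col: "\<And>j. j < m \<Longrightarrow> B2 $$ (i, j) = 0"
        proof -
          fix j assume jm: "j < m"
          show "B2 $$ (i, j) = 0"
          proof (cases "i < n - 1")
            case True thus ?thesis using Tt[OF True] jm mn low unfolding t_def by auto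
          next
            case False hence "i = n - 1" using i by auto
            thus ?thesis using Wz[of j] jm mn by auto
          qed
        qed
        show "(B2 * colop n m c) $$ (i,j) = 0"
        proof (cases "j = n - 1")
          case False
          with j have "j < m" by auto
          thus ?thesis using colop_mult[OF B2c i jn mn1] col[of j] False by simp
        next
          case True
          have "B2 $$ (i, n - 1) + c * B2 $$ (i, m) = 0"
          proof (cases "i = 0")
            case True thus ?thesis using tm unfolding c_def al_def t_def by (simp add: field_simps)
          next
            case i0: False
            show ?thesis
            proof (cases "i < n - 1")
              case True
              have "B2 $$ (i, m) = 0" using Tt[OF True mn1] low i0 unfolding t_def by auto
              thus ?thesis using Uz[OF _ True] i0 by auto
            next
              case False hence ii: "i = n - 1" using i by auto
              have "B2 $$ (i, m) = 0" unfolding ii using Wz[of m] mn by auto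
              thus ?thesis using ga0 unfolding ii ga_def by auto
            qed
          qed
          thus ?thesis using colop_mult[OF B2c i jn mn1] True by simp
        qed
      qed
      moreover have "card ({..<m} \<union> {n - 1}) = m + 1" using mn by auto
      ultimately have "m + 1 \<le> k" using kB2 by simp
      with False kk show False by linarith
    qed
  next
    case False
    have "card {..<n - 2} \<le> kernel.dim n B2"
    proof (rule zero_cols_kernel_dim[OF B2c])
      show "{..<n - 2} \<subseteq> {..<n}" by auto
      fix i j assume j: "j \<in> {..<n - 2}" and i: "i < n"
      show "B2 $$ (i,j) = 0"
      proof (cases "i < n - 1")
        case True thus ?thesis using Tt[OF True] j False unfolding t_def by auto
      next
        case False hence "i = n - 1" using i by auto
        thus ?thesis using Wz[of j] j by auto
      qed
    qed
    with kB2 kk n4 show False by simp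
  qed
qed



theorem lemma2p2:
  fixes B :: "'a :: field_char_0 mat" and n :: nat
  assumes "alg_closed_type TYPE('a)"
    and "n \<ge> 4"
    and "B \<in> carrier_mat n n"
    and "nilpotent_mat B"
    and "B * B \<noteq> 0\<^sub>m n n"
  shows "\<exists>mu. is_partition n mu \<and> \<not> (\<exists>A \<in> nil_commutator n B. has_shape A mu)"
proof (cases "\<exists>A \<in> nil_commutator n B. has_shape A [n]")
  case False
  show ?thesis by (intro exI[of _ "[n]"] conjI, insert False assms(2), auto simp: is_partition_def)
next
  case True
  then obtain A where A: "A \<in> nil_commutator n B" and shA: "has_shape A [n]" by auto
  from A have Ac: "A \<in> carrier_mat n n" and nA: "nilpotent_mat A" and AB: "A * B = B * A"
    unfolding nil_commutator_def by auto
  from A_side[OF Ac assms(3) assms(4) shA nA AB assms(5)] obtain k where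
    k: "0 < k" "2 * k < n" "kernel.dim n B = k" "kernel.dim n (B * B) = 2 * k" by auto
  show ?thesis
  proof (intro exI[of _ "[n - 1, 1]"] conjI)
    show "is_partition n [n - 1, 1]" using assms(2) by (auto simp: is_partition_def)
    show "\<not> (\<exists>X \<in> nil_commutator n B. has_shape X [n - 1, 1])"
    proof
      assume "\<exists>X \<in> nil_commutator n B. has_shape X [n - 1, 1]"
      then obtain X where X: "X \<in> nil_commutator n B" and shX: "has_shape X [n - 1, 1]" by auto
      from X have Xc: "X \<in> carrier_mat n n" and nX: "nilpotent_mat X" and XB: "X * B = B * X"
        unfolding nil_commutator_def by auto
      show False by (rule X_side[OF Xc assms(3) assms(2) nX assms(4) shX XB k(3) k(4) k(2)])
    qed
  qed
qed

end
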